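(* Let $G=(V,q)$ be a reversible connected graph and let $x_0\neq y_0\in V$. Then there exists an optimal transport plan $\rho$ from $x_0$ to $y_0$ such that (1) $\mu_\rho(k)=0$ for all integers $k$ with $|k|>1$, and (2) $\mu_\rho(-1)\ge 2q_{\min}$. Moreover, every optimal transport plan $\rho$ from a vertex $x_0$ to itself satisfies $\mu_\rho(k)=0$ for all $k\neq 0$.
   Context: A graph $G=(V,q)$ consists of a countable set $V$ and a function $q:V\times V\to[0,\infty)$ such that $\#\{y:q(x,y)>0\}<\infty$ for every $x\in V$. $G$ is reversible if there is $m:V\to(0,\infty)$ with $q(x,y)m(x)=q(y,x)m(y)$ for all $x,y$. For reversible $G$ write $x\sim y$ if $q(x,y)>0$, and let $d$ be the combinatorial distance $d(x,y)=\inf\{n: x=x_0\sim x_1\sim\dots\sim x_n=y\}$; connected means $d$ is finite. $q_{\min}:=\inf\{q(x,y): q(x,y)>0\}$. A transport plan from $x_0$ to $y_0$ is a map $\rho:V\times V\to[0,\infty)$ with $\sum_{y}\rho(x,y)=q(x_0,x)$ for all $x\neq x_0$ and $\sum_x\rho(x,y)=q(y_0,y)$ for all $y\ne y_0$. Its cost is $\mathrm{cost}(\rho)=\sum_{x,y}\rho(x,y)\big(d(x_0,y_0)-d(x,y)\big)$, and for $k\in\mathbb Z$, $\mu_\rho(k)=\sum_{x,y:\ d(x,y)-d(x_0,y_0)=k}\rho(x,y)$. A transport plan from $x_0$ to $y_0$ is optimal if it maximizes the cost among all transport plans from $x_0$ to $y_0$. *)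

theory Defs
  imports "HOL-Analysis.Analysis"
begin

definition is_graph :: "('a \<Rightarrow> 'a \<Rightarrow> real) \<Rightarrow> bool" where
  "is_graph q \<longleftrightarrow> (\<forall>x y. q x y \<ge> 0) \<and> (\<forall>x. finite {y. q x y > 0})"

definition reversible :: "('a \<Rightarrow> 'a \<Rightarrow> real) \<Rightarrow> bool" where
  "reversible q \<longleftrightarrow> (\<exists>m::'a \<Rightarrow> real. (\<forall>x. m x > 0) \<and> (\<forall>x y. q x y * m x = q y x * m y))"

definition edges :: "('a \<Rightarrow> 'a \<Rightarrow> real) \<Rightarrow> ('a \<times> 'a) set" where
  "edges q = {(x, y). q x y > 0}"

text \<open>Combinatorial distance (number of steps of a shortest path); meaningful when connected.\<close>
definition gdist :: "('a \<Rightarrow> 'a \<Rightarrow> real) \<Rightarrow> 'a \<Rightarrow> 'a \<Rightarrow> nat" where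
  "gdist q x y = (LEAST n. (x, y) \<in> (edges q) ^^ n)"

definition connected_graph :: "('a \<Rightarrow> 'a \<Rightarrow> real) \<Rightarrow> bool" where
  "connected_graph q \<longleftrightarrow> (\<forall>x y. \<exists>n. (x, y) \<in> (edges q) ^^ n)"

definition qmin :: "('a \<Rightarrow> 'a \<Rightarrow> real) \<Rightarrow> real" where
  "qmin q = Inf {q x y | x y. q x y > 0}"

definition transport_plan :: "('a \<Rightarrow> 'a \<Rightarrow> real) \<Rightarrow> 'a \<Rightarrow> 'a \<Rightarrow> ('a \<Rightarrow> 'a \<Rightarrow> real) \<Rightarrow> bool" where
  "transport_plan q x0 y0 \<rho> \<longleftrightarrow>
     (\<forall>x y. \<rho> x y \<ge> 0) \<and>
     (\<forall>x. x \<noteq> x0 \<longrightarrow> ((\<lambda>y. \<rho> x y) has_sum q x0 x) UNIV) \<and>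
     (\<forall>y. y \<noteq> y0 \<longrightarrow> ((\<lambda>x. \<rho> x y) has_sum q y0 y) UNIV)"

definition cost :: "('a \<Rightarrow> 'a \<Rightarrow> real) \<Rightarrow> 'a \<Rightarrow> 'a \<Rightarrow> ('a \<Rightarrow> 'a \<Rightarrow> real) \<Rightarrow> real" where
  "cost q x0 y0 \<rho> =
     (\<Sum>\<^sub>\<infinity>(x, y) \<in> UNIV. \<rho> x y * (real (gdist q x0 y0) - real (gdist q x y)))"

definition mu :: "('a \<Rightarrow> 'a \<Rightarrow> real) \<Rightarrow> 'a \<Rightarrow> 'a \<Rightarrow> ('a \<Rightarrow> 'a \<Rightarrow> real) \<Rightarrow> int \<Rightarrow> real" where
  "mu q x0 y0 \<rho> k =
     (\<Sum>\<^sub>\<infinity>(x, y) \<in> {(x, y). int (gdist q x y) - int (gdist q x0 y0) = k}. \<rho> x y)"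

definition optimal_plan :: "('a \<Rightarrow> 'a \<Rightarrow> real) \<Rightarrow> 'a \<Rightarrow> 'a \<Rightarrow> ('a \<Rightarrow> 'a \<Rightarrow> real) \<Rightarrow> bool" where
  "optimal_plan q x0 y0 \<rho> \<longleftrightarrow> transport_plan q x0 y0 \<rho> \<and>
     (\<forall>\<sigma>. transport_plan q x0 y0 \<sigma> \<longrightarrow> cost q x0 y0 \<sigma> \<le> cost q x0 y0 \<rho>)"

end

theory Submission imports Defs begin

locale G =
  fixes q :: "'a \<Rightarrow> 'a \<Rightarrow> real"
  assumes graph: "is_graph q" and rev: "reversible q" and conn: "connected_graph q"
begin

abbreviation d where "d \<equiv> gdist q"

lemma qnn: "0 \<le> q x y" using graph unfolding is_graph_def by auto

lemma qsym: "q x y > 0 \<Longrightarrow> q y x > 0"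
proof -
  assume a: "q x y > 0"
  obtain m where m: "\<forall>x. m x > 0" "\<forall>x y. q x y * m x = q y x * m y"
    using rev unfolding reversible_def by blast
  have "q y x * m y > 0" using m a by (metis mult_pos_pos)
  thus ?thesis using m(1) by (metis zero_less_mult_pos2)
qed

lemma d_path: "(x, y) \<in> edges q ^^ d x y"
proof -
  obtain n where "(x, y) \<in> edges q ^^ n" using conn unfolding connected_graph_def by blast
  thus ?thesis unfolding gdist_def by (rule LeastI)
qed

lemma d_le: "(x, y) \<in> edges q ^^ n \<Longrightarrow> d x y \<le> n"
  unfolding gdist_def by (rule Least_le)

lemma d_refl[simp]: "d x x = 0"
  using d_le[of x x 0] by simp

lemma d_zero: "d x y = 0 \<Longrightarrow> x = y"
  using d_path[of x y] by simp

lemma d_tri: "d x z \<le> d x y + d y z"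
proof -
  have "(x, z) \<in> edges q ^^ (d x y + d y z)"
    using d_path[of x y] d_path[of y z] by (auto simp: relpow_add)
  thus ?thesis by (rule d_le)
qed

lemma d_edge: "q x y > 0 \<Longrightarrow> d x y \<le> 1"
  using d_le[of x y 1] by (simp add: edges_def)

lemma d_edge': "q x y > 0 \<Longrightarrow> d y x \<le> 1"
  using d_edge qsym by blast

definition N where "N z = insert z {y. 0 < q z y}"

lemma N_fin: "finite (N z)"
  using graph unfolding is_graph_def N_def by auto

lemma N_d1: "y \<in> N z \<Longrightarrow> d z y \<le> 1" unfolding N_def using d_edge by auto
lemma N_d2: "y \<in> N z \<Longrightarrow> d y z \<le> 1" unfolding N_def using d_edge' by auto
lemma notN: "y \<notin> N z \<Longrightarrow> q z y = 0" unfolding N_def using qnn[of z y] by auto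

lemma first_step:
  assumes "x0 \<noteq> y0"
  shows "\<exists>x1. q x0 x1 > 0 \<and> d x1 y0 + 1 = d x0 y0"
proof -
  have "d x0 y0 \<noteq> 0" using d_zero assms by blast
  then obtain m where m: "d x0 y0 = Suc m" by (cases "d x0 y0") auto
  obtain x1 where "(x0,x1) \<in> edges q" "(x1, y0) \<in> edges q ^^ m"
    using d_path[of x0 y0] unfolding m by (blast elim: relpow_Suc_E2)
  hence a: "q x0 x1 > 0" "d x1 y0 \<le> m" using d_le by (auto simp: edges_def)
  have "d x0 y0 \<le> d x0 x1 + d x1 y0" by (rule d_tri)
  with d_edge[OF a(1)] a m show ?thesis by auto
qed

lemma last_step:
  assumes "x0 \<noteq> y0"
  shows "\<exists>y1. q y0 y1 > 0 \<and> d x0 y1 + 1 = d x0 y0"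
proof -
  have "d x0 y0 \<noteq> 0" using d_zero assms by blast
  then obtain m where m: "d x0 y0 = Suc m" by (cases "d x0 y0") auto
  obtain y1 where "(y1,y0) \<in> edges q" "(x0, y1) \<in> edges q ^^ m"
    using d_path[of x0 y0] unfolding m by (blast elim: relpow_Suc_E)
  hence a: "q y1 y0 > 0" "d x0 y1 \<le> m" using d_le by (auto simp: edges_def)
  have "d x0 y0 \<le> d x0 y1 + d y1 y0" by (rule d_tri)
  with d_edge[OF a(1)] a m qsym[OF a(1)] show ?thesis by (intro exI[of _ y1]) auto
qed

lemma hs_fin:
  fixes f :: "'b \<Rightarrow> real"
  assumes "finite A" "\<And>y. y \<notin> A \<Longrightarrow> f y = 0"
  shows "(f has_sum s) UNIV \<longleftrightarrow> sum f A = s"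
proof -
  have "(f has_sum s) UNIV \<longleftrightarrow> (f has_sum s) A"
    by (rule has_sum_cong_neutral) (use assms in auto)
  also have "\<dots> \<longleftrightarrow> sum f A = s"
    using has_sum_finite[OF assms(1), of f] has_sum_unique by metis
  finally show ?thesis .
qed

lemma fs_infsum:
  fixes h :: "'b \<Rightarrow> real"
  assumes "finite F" "\<And>p. p \<notin> F \<Longrightarrow> h p = 0"
  shows "infsum h A = sum h (A \<inter> F)"
proof -
  have "infsum h A = infsum h (A \<inter> F)"
    by (rule infsum_cong_neutral) (use assms in auto)
  thus ?thesis using assms(1) by simp
qed

definition fin_plan where
  "fin_plan x0 y0 \<rho> \<longleftrightarrow> (\<forall>x y. 0 \<le> \<rho> x y) \<and> (\<forall>x y. \<rho> x y \<noteq> 0 \<longrightarrow> x \<in> N x0 \<and> y \<in> N y0) \<and>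
     (\<forall>x. x \<noteq> x0 \<longrightarrow> (\<Sum>y\<in>N y0. \<rho> x y) = q x0 x) \<and> (\<forall>y. y \<noteq> y0 \<longrightarrow> (\<Sum>x\<in>N x0. \<rho> x y) = q y0 y)"

lemma plan_bound1:
  assumes "transport_plan q x0 y0 \<rho>" "x \<noteq> x0"
  shows "\<rho> x y \<le> q x0 x"
proof -
  have a: "((\<lambda>y. \<rho> x y) has_sum q x0 x) UNIV" "\<forall>x y. 0 \<le> \<rho> x y"
    using assms unfolding transport_plan_def by auto
  have b: "((\<lambda>y. \<rho> x y) has_sum \<rho> x y) {y}" by (rule has_sum_finiteI) auto
  show ?thesis by (rule has_sum_mono_neutral[OF b a(1)]) (use a(2) in auto)
qed

lemma plan_bound2:
  assumes "transport_plan q x0 y0 \<rho>" "y \<noteq> y0"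
  shows "\<rho> x y \<le> q y0 y"
proof -
  have a: "((\<lambda>x. \<rho> x y) has_sum q y0 y) UNIV" "\<forall>x y. 0 \<le> \<rho> x y"
    using assms unfolding transport_plan_def by auto
  have b: "((\<lambda>x. \<rho> x y) has_sum \<rho> x y) {x}" by (rule has_sum_finiteI) auto
  show ?thesis by (rule has_sum_mono_neutral[OF b a(1)]) (use a(2) in auto)
qed

lemma plan_supp:
  assumes "transport_plan q x0 y0 \<rho>" "\<rho> x y \<noteq> 0"
  shows "x \<in> N x0 \<and> y \<in> N y0"
proof -
  have "0 \<le> \<rho> x y" using assms unfolding transport_plan_def by auto
  hence p: "0 < \<rho> x y" using assms(2) by auto
  have "x \<in> N x0"
  proof (cases "x = x0")
    case False thus ?thesis using plan_bound1[OF assms(1) False, of y] p unfolding N_def by auto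
  qed (auto simp: N_def)
  moreover have "y \<in> N y0"
  proof (cases "y = y0")
    case False thus ?thesis using plan_bound2[OF assms(1) False, of x] p unfolding N_def by auto
  qed (auto simp: N_def)
  ultimately show ?thesis by auto
qed

lemma plan_fin: "transport_plan q x0 y0 \<rho> \<Longrightarrow> fin_plan x0 y0 \<rho>"
proof -
  assume tp: "transport_plan q x0 y0 \<rho>"
  have s: "\<And>x y. \<rho> x y \<noteq> 0 \<Longrightarrow> x \<in> N x0 \<and> y \<in> N y0" using plan_supp[OF tp] by blast
  have r: "(\<Sum>y\<in>N y0. \<rho> x y) = q x0 x" if "x \<noteq> x0" for x
  proof -
    have "((\<lambda>y. \<rho> x y) has_sum q x0 x) UNIV" using tp that unfolding transport_plan_def by auto
    thus ?thesis using hs_fin[OF N_fin, of y0 "\<lambda>y. \<rho> x y"] s by blast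
  qed
  have c: "(\<Sum>x\<in>N x0. \<rho> x y) = q y0 y" if "y \<noteq> y0" for y
  proof -
    have "((\<lambda>x. \<rho> x y) has_sum q y0 y) UNIV" using tp that unfolding transport_plan_def by auto
    thus ?thesis using hs_fin[OF N_fin, of x0 "\<lambda>x. \<rho> x y"] s by blast
  qed
  show ?thesis unfolding fin_plan_def using tp s r c unfolding transport_plan_def by blast
qed

lemma fin_plan: "fin_plan x0 y0 \<rho> \<Longrightarrow> transport_plan q x0 y0 \<rho>"
proof -
  assume fp: "fin_plan x0 y0 \<rho>"
  have r: "((\<lambda>y. \<rho> x y) has_sum q x0 x) UNIV" if "x \<noteq> x0" for x
    using hs_fin[OF N_fin, of y0 "\<lambda>y. \<rho> x y"] fp that unfolding fin_plan_def by blast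
  have c: "((\<lambda>x. \<rho> x y) has_sum q y0 y) UNIV" if "y \<noteq> y0" for y
    using hs_fin[OF N_fin, of x0 "\<lambda>x. \<rho> x y"] fp that unfolding fin_plan_def by blast
  show ?thesis unfolding transport_plan_def using fp r c unfolding fin_plan_def by blast
qed

definition Cf where
  "Cf x0 y0 \<rho> = (\<Sum>x\<in>N x0. \<Sum>y\<in>N y0. \<rho> x y * (real (d x0 y0) - real (d x y)))"

lemma cost_eq:
  assumes "fin_plan x0 y0 \<rho>"
  shows "cost q x0 y0 \<rho> = Cf x0 y0 \<rho>"
proof -
  have s: "\<And>x y. \<rho> x y \<noteq> 0 \<Longrightarrow> x \<in> N x0 \<and> y \<in> N y0" using assms unfolding fin_plan_def by blast
  have "cost q x0 y0 \<rho> = (\<Sum>(x,y)\<in>UNIV \<inter> (N x0 \<times> N y0). \<rho> x y * (real (d x0 y0) - real (d x y)))"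
    unfolding cost_def by (rule fs_infsum) (use N_fin s in auto)
  also have "\<dots> = Cf x0 y0 \<rho>" unfolding Cf_def by (simp add: sum.cartesian_product)
  finally show ?thesis .
qed

lemma mu_eq:
  assumes "fin_plan x0 y0 \<rho>"
  shows "mu q x0 y0 \<rho> k = (\<Sum>(x,y)\<in>{(x, y). int (d x y) - int (d x0 y0) = k} \<inter> (N x0 \<times> N y0). \<rho> x y)"
proof -
  have s: "\<And>x y. \<rho> x y \<noteq> 0 \<Longrightarrow> x \<in> N x0 \<and> y \<in> N y0" using assms unfolding fin_plan_def by blast
  show ?thesis unfolding mu_def by (rule fs_infsum) (use N_fin s in auto)
qed


lemma cont_coord: "continuous_on UNIV (\<lambda>\<rho>::'a \<Rightarrow> 'a \<Rightarrow> real. \<rho> x y)"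
  using continuous_on_product_then_coordinatewise[OF continuous_on_product_coordinates[of x]] .

lemma closed_imp_const: "closed {\<rho>. Q \<rho>} \<Longrightarrow> closed {\<rho>. P \<longrightarrow> Q \<rho>}"
  by (cases P) auto

lemma compact_box: "compact (PiE UNIV (\<lambda>x. PiE UNIV (\<lambda>y. {0..(c x y::real)})))"
proof -
  have "compact (PiE UNIV (\<lambda>y. {0..(c x y::real)}))" for x
    using compactin_PiE[of "\<lambda>_. euclidean" UNIV "\<lambda>y. {0..(c x y::real)}"]
    by (simp add: euclidean_product_topology)
  thus ?thesis
    using compactin_PiE[of "\<lambda>_. euclidean" UNIV "\<lambda>x. PiE UNIV (\<lambda>y. {0..(c x y::real)})"]
    by (simp add: euclidean_product_topology)
qed

lemma exists_opt:
  "\<exists>\<rho>. fin_plan x0 y0 \<rho> \<and> (\<forall>\<sigma>. fin_plan x0 y0 \<sigma> \<longrightarrow> Cf x0 y0 \<sigma> \<le> Cf x0 y0 \<rho>)"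
proof -
  define b where "b x y = (if x \<in> N x0 \<and> y \<in> N y0 then q x0 x + q y0 y else 0)" for x y
  define S where "S = {\<rho>. (\<forall>x y. 0 \<le> \<rho> x y) \<and> (\<forall>x y. \<rho> x y \<le> b x y) \<and> \<rho> x0 y0 = 0 \<and>
     (\<forall>x. x \<noteq> x0 \<longrightarrow> (\<Sum>y\<in>N y0. \<rho> x y) = q x0 x) \<and> (\<forall>y. y \<noteq> y0 \<longrightarrow> (\<Sum>x\<in>N x0. \<rho> x y) = q y0 y)}"
  have Sfin: "fin_plan x0 y0 \<rho>" if "\<rho> \<in> S" for \<rho>
  proof -
    have "x \<in> N x0 \<and> y \<in> N y0" if "\<rho> x y \<noteq> 0" for x y
    proof (rule ccontr)
      assume "\<not> ?thesis"
      hence "b x y = 0" unfolding b_def by auto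
      thus False using \<open>\<rho> \<in> S\<close> that unfolding S_def by (metis (mono_tags, lifting) mem_Collect_eq order_antisym)
    qed
    thus ?thesis using that unfolding S_def fin_plan_def by blast
  qed
  have cl: "closed S"
    unfolding S_def
    by (intro closed_Collect_conj closed_Collect_all closed_imp_const closed_Collect_le closed_Collect_eq
        continuous_on_sum cont_coord continuous_on_const)
  have sub: "S \<subseteq> PiE UNIV (\<lambda>x. PiE UNIV (\<lambda>y. {0..b x y}))"
    unfolding S_def by auto
  have cS: "compact S"
  proof -
    have "compact (PiE UNIV (\<lambda>x. PiE UNIV (\<lambda>y. {0..b x y})) \<inter> S)"
      using compact_box cl by blast
    thus ?thesis using sub by (simp add: Int_absorb1)
  qed
  define \<rho>d where "\<rho>d x y = (if x \<noteq> x0 \<and> y = y0 then q x0 x else 0) + (if x = x0 \<and> y \<noteq> y0 then q y0 y else 0)" for x y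
  have y0N: "y0 \<in> N y0" and x0N: "x0 \<in> N x0" unfolding N_def by auto
  have "\<rho>d \<in> S"
  proof -
    have "0 \<le> \<rho>d x y" for x y unfolding \<rho>d_def using qnn by auto
    moreover have "\<rho>d x y \<le> b x y" for x y
      unfolding \<rho>d_def b_def using qnn[of x0 x] qnn[of y0 y] notN[of x x0] notN[of y y0] y0N x0N by auto
    moreover have "(\<Sum>y\<in>N y0. \<rho>d x y) = q x0 x" if "x \<noteq> x0" for x
      unfolding \<rho>d_def using that y0N N_fin[of y0] by (simp add: sum.delta')
    moreover have "(\<Sum>x\<in>N x0. \<rho>d x y) = q y0 y" if "y \<noteq> y0" for y
      unfolding \<rho>d_def using that x0N N_fin[of x0] by (simp add: sum.delta')
    ultimately show ?thesis unfolding S_def by (auto simp: \<rho>d_def)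
  qed
  hence ne: "S \<noteq> {}" by auto
  have cont: "continuous_on S (Cf x0 y0)"
    unfolding Cf_def by (intro continuous_on_sum continuous_on_mult_right continuous_on_subset[OF cont_coord]) auto
  obtain \<rho> where \<rho>: "\<rho> \<in> S" "\<And>\<sigma>. \<sigma> \<in> S \<Longrightarrow> Cf x0 y0 \<sigma> \<le> Cf x0 y0 \<rho>"
    using continuous_attains_sup[OF cS ne cont] by blast
  have "Cf x0 y0 \<sigma> \<le> Cf x0 y0 \<rho>" if fp: "fin_plan x0 y0 \<sigma>" for \<sigma>
  proof -
    define \<sigma>' where "\<sigma>' x y = (if x = x0 \<and> y = y0 then 0 else \<sigma> x y)" for x y
    have nn: "\<And>x y. 0 \<le> \<sigma> x y" and sp: "\<And>x y. \<sigma> x y \<noteq> 0 \<Longrightarrow> x \<in> N x0 \<and> y \<in> N y0"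
      and rw: "\<And>x. x \<noteq> x0 \<Longrightarrow> (\<Sum>y\<in>N y0. \<sigma> x y) = q x0 x"
      and cl: "\<And>y. y \<noteq> y0 \<Longrightarrow> (\<Sum>x\<in>N x0. \<sigma> x y) = q y0 y"
      using fp unfolding fin_plan_def by blast+
    have bd: "\<sigma>' x y \<le> b x y" for x y
    proof (cases "\<sigma> x y = 0 \<or> (x = x0 \<and> y = y0)")
      case True thus ?thesis unfolding \<sigma>'_def b_def using qnn[of x0 x] qnn[of y0 y] by auto
    next
      case False
      hence xy: "x \<in> N x0" "y \<in> N y0" and ne: "\<not> (x = x0 \<and> y = y0)" using sp by auto
      show ?thesis
      proof (cases "x = x0")
        case False
        have "\<sigma> x y \<le> (\<Sum>y\<in>N y0. \<sigma> x y)" by (rule member_le_sum) (use xy N_fin nn in auto)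
        thus ?thesis using rw[OF False] xy qnn[of y0 y] qnn[of x0 x] unfolding \<sigma>'_def b_def by auto
      next
        case True
        hence yne: "y \<noteq> y0" using ne by auto
        have "\<sigma> x y \<le> (\<Sum>x\<in>N x0. \<sigma> x y)" by (rule member_le_sum) (use xy N_fin nn in auto)
        thus ?thesis using cl[OF yne] xy qnn[of x0 x] qnn[of y0 y] unfolding \<sigma>'_def b_def by auto
      qed
    qed
    have "\<sigma>' \<in> S" unfolding S_def using bd nn rw cl by (auto simp: \<sigma>'_def)
    hence "Cf x0 y0 \<sigma>' \<le> Cf x0 y0 \<rho>" by (rule \<rho>(2))
    moreover have "Cf x0 y0 \<sigma>' = Cf x0 y0 \<sigma>" unfolding Cf_def \<sigma>'_def
      by (intro sum.cong refl) auto
    ultimately show ?thesis by simp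
  qed
  thus ?thesis using Sfin[OF \<rho>(1)] by blast
qed


lemma qmin_le: "q x y > 0 \<Longrightarrow> qmin q \<le> q x y"
  unfolding qmin_def by (rule cInf_lower) (auto intro!: bdd_belowI[of _ 0])

lemma improve:
  assumes neq: "x0 \<noteq> y0" and fp: "fin_plan x0 y0 \<rho>"
  shows "\<exists>\<rho>'. fin_plan x0 y0 \<rho>' \<and> Cf x0 y0 \<rho> \<le> Cf x0 y0 \<rho>' \<and>
     (\<forall>x y. \<rho>' x y \<noteq> 0 \<longrightarrow> \<bar>int (d x y) - int (d x0 y0)\<bar> \<le> 1) \<and> 2 * qmin q \<le> mu q x0 y0 \<rho>' (-1)"
proof -
  obtain x1 where x1: "q x0 x1 > 0" "d x1 y0 + 1 = d x0 y0" using first_step[OF neq] by blast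
  obtain y1 where y1: "q y0 y1 > 0" "d x0 y1 + 1 = d x0 y0" using last_step[OF neq] by blast
  have nn: "\<And>x y. 0 \<le> \<rho> x y" and sp: "\<And>x y. \<rho> x y \<noteq> 0 \<Longrightarrow> x \<in> N x0 \<and> y \<in> N y0"
    and rw: "\<And>x. x \<noteq> x0 \<Longrightarrow> (\<Sum>y\<in>N y0. \<rho> x y) = q x0 x"
    and cl: "\<And>y. y \<noteq> y0 \<Longrightarrow> (\<Sum>x\<in>N x0. \<rho> x y) = q y0 y"
    using fp unfolding fin_plan_def by blast+
  have y0N: "y0 \<in> N y0" and x0N: "x0 \<in> N x0" unfolding N_def by auto
  have x1N: "x1 \<in> N x0" and y1N: "y1 \<in> N y0" using x1 y1 unfolding N_def by auto
  have x1ne: "x1 \<noteq> x0" using x1 by auto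
  have y1ne: "y1 \<noteq> y0" using y1 by auto
  define d0 where "d0 = d x0 y0"
  define bad where "bad x y \<longleftrightarrow> x \<noteq> x0 \<and> y \<noteq> y0 \<and> (1 < \<bar>int (d x y) - int d0\<bar> \<or> x = x1 \<or> y = y1)" for x y
  define B where "B x y = (if bad x y then \<rho> x y else 0)" for x y
  define R1 where "R1 x y = (if x \<noteq> x0 \<and> y = y0 then (\<Sum>y'\<in>N y0. B x y') else 0)" for x y
  define R2 where "R2 x y = (if x = x0 \<and> y \<noteq> y0 then (\<Sum>x'\<in>N x0. B x' y) else 0)" for x y
  define \<rho>' where "\<rho>' x y = \<rho> x y - B x y + R1 x y + R2 x y" for x y
  define w where "w x y = real d0 - real (d x y)" for x y
  have Bnn: "0 \<le> B x y" for x y unfolding B_def using nn by auto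
  have Ble: "B x y \<le> \<rho> x y" for x y unfolding B_def using nn by auto
  have Bx0: "B x0 y = 0" for y unfolding B_def bad_def by auto
  have By0: "B x y0 = 0" for x unfolding B_def bad_def by auto
  have R1nn: "0 \<le> R1 x y" for x y unfolding R1_def using Bnn by (auto intro: sum_nonneg)
  have R2nn: "0 \<le> R2 x y" for x y unfolding R2_def using Bnn by (auto intro: sum_nonneg)
  have fp': "fin_plan x0 y0 \<rho>'"
  proof -
    have n: "0 \<le> \<rho>' x y" for x y unfolding \<rho>'_def using Ble[of x y] R1nn[of x y] R2nn[of x y] by linarith
    have s: "x \<in> N x0 \<and> y \<in> N y0" if h: "\<rho>' x y \<noteq> 0" for x y
    proof -
      consider "\<rho> x y \<noteq> 0" | "R1 x y \<noteq> 0" | "R2 x y \<noteq> 0" using h Ble[of x y] Bnn[of x y]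
        unfolding \<rho>'_def by fastforce
      thus ?thesis
      proof cases
        case 1 thus ?thesis using sp by blast
      next
        case 2
        hence "y = y0" "(\<Sum>y'\<in>N y0. B x y') \<noteq> 0" unfolding R1_def by (auto split: if_splits)
        then obtain y' where "B x y' \<noteq> 0" by (meson sum.not_neutral_contains_not_neutral)
        hence "\<rho> x y' \<noteq> 0" unfolding B_def by (auto split: if_splits)
        thus ?thesis using sp \<open>y = y0\<close> y0N by blast
      next
        case 3
        hence "x = x0" "(\<Sum>x'\<in>N x0. B x' y) \<noteq> 0" unfolding R2_def by (auto split: if_splits)
        then obtain x' where "B x' y \<noteq> 0" by (meson sum.not_neutral_contains_not_neutral)
        hence "\<rho> x' y \<noteq> 0" unfolding B_def by (auto split: if_splits)
        thus ?thesis using sp \<open>x = x0\<close> x0N by blast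
      qed
    qed
    have r: "(\<Sum>y\<in>N y0. \<rho>' x y) = q x0 x" if "x \<noteq> x0" for x
    proof -
      have "\<rho>' x y = (\<rho> x y - B x y) + (if y = y0 then (\<Sum>y'\<in>N y0. B x y') else 0)" for y
        unfolding \<rho>'_def R1_def R2_def using that by auto
      hence "(\<Sum>y\<in>N y0. \<rho>' x y) = (\<Sum>y\<in>N y0. \<rho> x y) - (\<Sum>y\<in>N y0. B x y) + (\<Sum>y'\<in>N y0. B x y')"
        using y0N N_fin[of y0] by (simp add: sum.distrib sum_subtractf sum.delta')
      thus ?thesis using rw[OF that] by simp
    qed
    have c: "(\<Sum>x\<in>N x0. \<rho>' x y) = q y0 y" if "y \<noteq> y0" for y
    proof -
      have "\<rho>' x y = (\<rho> x y - B x y) + (if x = x0 then (\<Sum>x'\<in>N x0. B x' y) else 0)" for x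
        unfolding \<rho>'_def R1_def R2_def using that by auto
      hence "(\<Sum>x\<in>N x0. \<rho>' x y) = (\<Sum>x\<in>N x0. \<rho> x y) - (\<Sum>x\<in>N x0. B x y) + (\<Sum>x'\<in>N x0. B x' y)"
        using x0N N_fin[of x0] by (simp add: sum.distrib sum_subtractf sum.delta')
      thus ?thesis using cl[OF that] by simp
    qed
    show ?thesis unfolding fin_plan_def using n s r c by blast
  qed
  have split: "Cf x0 y0 \<rho>' = Cf x0 y0 \<rho> - (\<Sum>x\<in>N x0. \<Sum>y\<in>N y0. B x y * w x y)
      + (\<Sum>x\<in>N x0. \<Sum>y\<in>N y0. R1 x y * w x y) + (\<Sum>x\<in>N x0. \<Sum>y\<in>N y0. R2 x y * w x y)"
    unfolding Cf_def \<rho>'_def w_def d0_def by (simp add: algebra_simps sum.distrib sum_subtractf)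
  have P1: "(\<Sum>x\<in>N x0. \<Sum>y\<in>N y0. R1 x y * w x y) = (\<Sum>x\<in>N x0. \<Sum>y\<in>N y0. B x y * w x y0)"
  proof (rule sum.cong[OF refl])
    fix x assume "x \<in> N x0"
    show "(\<Sum>y\<in>N y0. R1 x y * w x y) = (\<Sum>y\<in>N y0. B x y * w x y0)"
    proof (cases "x = x0")
      case True thus ?thesis unfolding R1_def using Bx0 by simp
    next
      case False
      have "R1 x y * w x y = (if y = y0 then (\<Sum>y'\<in>N y0. B x y') * w x y0 else 0)" for y
        unfolding R1_def using False by auto
      hence "(\<Sum>y\<in>N y0. R1 x y * w x y) = (\<Sum>y'\<in>N y0. B x y') * w x y0"
        using y0N N_fin[of y0] by (simp add: sum.delta')
      also have "\<dots> = (\<Sum>y\<in>N y0. B x y * w x y0)" by (simp add: sum_distrib_right)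
      finally show ?thesis .
    qed
  qed
  have P2: "(\<Sum>x\<in>N x0. \<Sum>y\<in>N y0. R2 x y * w x y) = (\<Sum>x\<in>N x0. \<Sum>y\<in>N y0. B x y * w x0 y)"
  proof -
    have "(\<Sum>x\<in>N x0. \<Sum>y\<in>N y0. R2 x y * w x y) = (\<Sum>y\<in>N y0. \<Sum>x\<in>N x0. R2 x y * w x y)"
      by (rule sum.swap)
    also have "\<dots> = (\<Sum>y\<in>N y0. \<Sum>x\<in>N x0. B x y * w x0 y)"
    proof (rule sum.cong[OF refl])
      fix y assume "y \<in> N y0"
      show "(\<Sum>x\<in>N x0. R2 x y * w x y) = (\<Sum>x\<in>N x0. B x y * w x0 y)"
      proof (cases "y = y0")
        case True thus ?thesis unfolding R2_def using By0 by simp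
      next
        case False
        have "R2 x y * w x y = (if x = x0 then (\<Sum>x'\<in>N x0. B x' y) * w x0 y else 0)" for x
          unfolding R2_def using False by auto
        hence "(\<Sum>x\<in>N x0. R2 x y * w x y) = (\<Sum>x'\<in>N x0. B x' y) * w x0 y"
          using x0N N_fin[of x0] by (simp add: sum.delta')
        also have "\<dots> = (\<Sum>x\<in>N x0. B x y * w x0 y)" by (simp add: sum_distrib_right)
        finally show ?thesis .
      qed
    qed
    also have "\<dots> = (\<Sum>x\<in>N x0. \<Sum>y\<in>N y0. B x y * w x0 y)" by (rule sum.swap)
    finally show ?thesis .
  qed
  have diff: "Cf x0 y0 \<rho>' - Cf x0 y0 \<rho> = (\<Sum>x\<in>N x0. \<Sum>y\<in>N y0. B x y * (w x y0 + w x0 y - w x y))"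
    unfolding split P1 P2 by (simp add: algebra_simps sum.distrib sum_subtractf)
  have trm: "0 \<le> B x y * (w x y0 + w x0 y - w x y)" if "x \<in> N x0" "y \<in> N y0" for x y
  proof (cases "bad x y")
    case False thus ?thesis unfolding B_def by simp
  next
    case True
    have a: "d x0 x \<le> 1" "d x x0 \<le> 1" using N_d1 N_d2 that(1) by auto
    have b: "d y0 y \<le> 1" "d y y0 \<le> 1" using N_d1 N_d2 that(2) by auto
    have t1: "d x y0 \<le> d x x0 + d x0 y0" "d x0 y \<le> d x0 y0 + d y0 y"
      "d x y0 \<le> d x y + d y y0" "d x0 y \<le> d x0 x + d x y"
      "d x0 y0 \<le> d x0 x + d x y0" "d x0 y0 \<le> d x0 y + d y y0"
      "d x y \<le> d x x0 + d x0 y0 + d y0 y"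
      using d_tri[of x y0 x0] d_tri[of x0 y y0] d_tri[of x y0 y] d_tri[of x0 y x] d_tri[of x0 y0 x]
        d_tri[of x0 y0 y] d_tri[of x y y0] d_tri[of x y0 x0] by auto
    have t2: "d x0 y \<le> d x0 x1 + d x1 y" "d x y0 \<le> d x y1 + d y1 y0"
      using d_tri[of x0 y x1] d_tri[of x y0 y1] by auto
    have t3: "d x0 x1 \<le> 1" "d y1 y0 \<le> 1" using d_edge[OF x1(1)] d_edge'[OF y1(1)] by auto
    have key: "d x y0 + d x0 y \<le> d x y + d0"
      using True a b t1 t2 t3 x1(2) y1(2) unfolding bad_def d0_def by auto
    hence "0 \<le> w x y0 + w x0 y - w x y" unfolding w_def
      by (simp add: of_nat_add[symmetric] del: of_nat_add)
    thus ?thesis using Bnn[of x y] by simp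
  qed
  have "0 \<le> Cf x0 y0 \<rho>' - Cf x0 y0 \<rho>" unfolding diff
    by (intro sum_nonneg) (use trm in auto)
  hence cost: "Cf x0 y0 \<rho> \<le> Cf x0 y0 \<rho>'" by simp
  have short: "\<bar>int (d x y) - int (d x0 y0)\<bar> \<le> 1" if "\<rho>' x y \<noteq> 0" for x y
  proof -
    have xy: "x \<in> N x0" "y \<in> N y0" using fp' that unfolding fin_plan_def by blast+
    have a: "d x0 x \<le> 1" "d x x0 \<le> 1" using N_d1 N_d2 xy(1) by auto
    have b: "d y0 y \<le> 1" "d y y0 \<le> 1" using N_d1 N_d2 xy(2) by auto
    show ?thesis
    proof (cases "x = x0 \<or> y = y0")
      case True
      thus ?thesis using a b d_tri[of x0 y y0] d_tri[of x0 y0 y] d_tri[of x y0 x0] d_tri[of x0 y0 x]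
        by auto
    next
      case False
      hence "\<rho>' x y = \<rho> x y - B x y" unfolding \<rho>'_def R1_def R2_def by auto
      hence "\<not> bad x y" using that unfolding B_def by auto
      thus ?thesis using False unfolding bad_def d0_def by auto
    qed
  qed
  have v1: "\<rho>' x1 y0 = q x0 x1"
  proof -
    have "\<rho> x1 y = (if y = y0 then \<rho> x1 y0 else 0) + B x1 y" for y
      unfolding B_def bad_def using x1ne by (cases "y = y0") simp_all
    hence "(\<Sum>y\<in>N y0. \<rho> x1 y) = (\<Sum>y\<in>N y0. (if y = y0 then \<rho> x1 y0 else 0) + B x1 y)"
      by (intro sum.cong refl)
    also have "\<dots> = \<rho> x1 y0 + (\<Sum>y\<in>N y0. B x1 y)"
      using y0N N_fin[of y0] by (simp add: sum.distrib sum.delta')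
    finally have "(\<Sum>y\<in>N y0. \<rho> x1 y) = \<rho> x1 y0 + (\<Sum>y\<in>N y0. B x1 y)" .
    thus ?thesis unfolding \<rho>'_def R1_def R2_def using x1ne By0 rw[OF x1ne] by simp
  qed
  have v2: "\<rho>' x0 y1 = q y0 y1"
  proof -
    have "\<rho> x y1 = (if x = x0 then \<rho> x0 y1 else 0) + B x y1" for x
      unfolding B_def bad_def using y1ne by (cases "x = x0") simp_all
    hence "(\<Sum>x\<in>N x0. \<rho> x y1) = (\<Sum>x\<in>N x0. (if x = x0 then \<rho> x0 y1 else 0) + B x y1)"
      by (intro sum.cong refl)
    also have "\<dots> = \<rho> x0 y1 + (\<Sum>x\<in>N x0. B x y1)"
      using x0N N_fin[of x0] by (simp add: sum.distrib sum.delta')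
    finally have "(\<Sum>x\<in>N x0. \<rho> x y1) = \<rho> x0 y1 + (\<Sum>x\<in>N x0. B x y1)" .
    thus ?thesis unfolding \<rho>'_def R1_def R2_def using y1ne Bx0 cl[OF y1ne] by simp
  qed
  define A where "A = {(x, y). int (d x y) - int (d x0 y0) = -1} \<inter> (N x0 \<times> N y0)"
  have mu: "mu q x0 y0 \<rho>' (-1) = (\<Sum>(x,y)\<in>A. \<rho>' x y)" unfolding A_def by (rule mu_eq[OF fp'])
  have sub: "{(x1, y0), (x0, y1)} \<subseteq> A" unfolding A_def using x1 y1 x1N y1N x0N y0N by auto
  have "(\<Sum>(x,y)\<in>{(x1, y0), (x0, y1)}. \<rho>' x y) \<le> (\<Sum>(x,y)\<in>A. \<rho>' x y)"
  proof (rule sum_mono2[OF _ sub])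
    show "finite A" unfolding A_def using N_fin by (intro finite_Int disjI2 finite_cartesian_product)
    have nn': "\<And>x y. 0 \<le> \<rho>' x y" using fp' unfolding fin_plan_def by blast
    show "\<And>b. b \<in> A - {(x1, y0), (x0, y1)} \<Longrightarrow> 0 \<le> (case b of (x, y) \<Rightarrow> \<rho>' x y)"
      using nn' by (simp split: prod.splits)
  qed
  moreover have "(\<Sum>(x,y)\<in>{(x1, y0), (x0, y1)}. \<rho>' x y) = q x0 x1 + q y0 y1"
    using x1ne v1 v2 by simp
  moreover have "2 * qmin q \<le> q x0 x1 + q y0 y1" using qmin_le[OF x1(1)] qmin_le[OF y1(1)] by simp
  ultimately have "2 * qmin q \<le> mu q x0 y0 \<rho>' (-1)" using mu by simp
  thus ?thesis using fp' cost short by blast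
qed


lemma self_opt:
  assumes opt: "optimal_plan q z z \<rho>" and k: "k \<noteq> 0"
  shows "mu q z z \<rho> k = 0"
proof -
  have tp: "transport_plan q z z \<rho>" using opt unfolding optimal_plan_def by blast
  have fp: "fin_plan z z \<rho>" by (rule plan_fin[OF tp])
  define \<rho>i where "\<rho>i x y = (if x = y \<and> x \<noteq> z then q z x else 0)" for x y
  have fpi: "fin_plan z z \<rho>i"
  proof -
    have "0 \<le> \<rho>i x y" for x y unfolding \<rho>i_def using qnn by auto
    moreover have "x \<in> N z \<and> y \<in> N z" if "\<rho>i x y \<noteq> 0" for x y
      using that notN unfolding \<rho>i_def by (auto split: if_splits)
    moreover have "(\<Sum>y\<in>N z. \<rho>i x y) = q z x" if "x \<noteq> z" for x
    proof -
      have "(\<Sum>y\<in>N z. \<rho>i x y) = (\<Sum>y\<in>N z. if x = y then q z x else 0)"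
        unfolding \<rho>i_def using that by (intro sum.cong) auto
      also have "\<dots> = q z x" using N_fin[of z] notN[of x z] by (simp add: sum.delta)
      finally show ?thesis .
    qed
    moreover have "(\<Sum>x\<in>N z. \<rho>i x y) = q z y" if "y \<noteq> z" for y
    proof -
      have "(\<Sum>x\<in>N z. \<rho>i x y) = (\<Sum>x\<in>N z. if x = y then q z y else 0)"
        unfolding \<rho>i_def using that by (intro sum.cong) auto
      also have "\<dots> = q z y" using N_fin[of z] notN[of y z] by (simp add: sum.delta')
      finally show ?thesis .
    qed
    ultimately show ?thesis unfolding fin_plan_def by blast
  qed
  have "Cf z z \<rho>i = 0" unfolding Cf_def \<rho>i_def by (intro sum.neutral ballI) auto
  hence "cost q z z \<rho>i = 0" using cost_eq[OF fpi] by simp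
  moreover have "cost q z z \<rho>i \<le> cost q z z \<rho>" using opt fin_plan[OF fpi] unfolding optimal_plan_def by blast
  ultimately have "0 \<le> Cf z z \<rho>" using cost_eq[OF fp] by simp
  hence le0: "(\<Sum>(x,y)\<in>N z \<times> N z. \<rho> x y * real (d x y)) \<le> 0"
    unfolding Cf_def by (simp add: sum.cartesian_product sum_negf)
  have nn: "\<And>x y. 0 \<le> \<rho> x y" and sp: "\<And>x y. \<rho> x y \<noteq> 0 \<Longrightarrow> x \<in> N z \<and> y \<in> N z"
    using fp unfolding fin_plan_def by blast+
  have ge: "\<And>p. p \<in> N z \<times> N z \<Longrightarrow> 0 \<le> (case p of (x,y) \<Rightarrow> \<rho> x y * real (d x y))"
    using nn by auto
  have "(\<Sum>(x,y)\<in>N z \<times> N z. \<rho> x y * real (d x y)) = 0"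
  proof -
    have "0 \<le> (\<Sum>(x,y)\<in>N z \<times> N z. \<rho> x y * real (d x y))"
      by (rule sum_nonneg) (use nn in auto)
    thus ?thesis using le0 by linarith
  qed
  hence sum0: "(\<Sum>(x,y)\<in>N z \<times> N z. \<rho> x y * real (d x y)) = 0" .
  have zero: "\<rho> x y * real (d x y) = 0" if "x \<in> N z" "y \<in> N z" for x y
  proof -
    have "\<rho> x y * real (d x y) \<le> (\<Sum>(x,y)\<in>N z \<times> N z. \<rho> x y * real (d x y))"
      using member_le_sum[of "(x,y)" "N z \<times> N z" "\<lambda>(x,y). \<rho> x y * real (d x y)"] nn that N_fin
      by auto
    moreover have "0 \<le> \<rho> x y * real (d x y)" using nn[of x y] by simp
    ultimately show ?thesis using sum0 by linarith
  qed
  show ?thesis unfolding mu_def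
  proof (rule infsum_0)
    fix p assume p: "p \<in> {(x, y). int (d x y) - int (d z z) = k}"
    obtain x y where xy: "p = (x, y)" by (cases p)
    have dne: "d x y \<noteq> 0" using p k unfolding xy by simp
    show "(case p of (x, y) \<Rightarrow> \<rho> x y) = 0"
    proof (rule ccontr)
      assume "(case p of (x, y) \<Rightarrow> \<rho> x y) \<noteq> 0"
      hence r: "\<rho> x y \<noteq> 0" using xy by simp
      have "\<rho> x y * real (d x y) = 0" using sp[OF r] zero by blast
      thus False using r dne by simp
    qed
  qed
qed

end

theorem mainTheorem1:
  fixes q :: "'a::countable \<Rightarrow> 'a \<Rightarrow> real" and x0 y0 :: 'a
  assumes "is_graph q" and "reversible q" and "connected_graph q"
  shows "(x0 \<noteq> y0 \<longrightarrow>
            (\<exists>\<rho>. optimal_plan q x0 y0 \<rho> \<and>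
                 (\<forall>k::int. \<bar>k\<bar> > 1 \<longrightarrow> mu q x0 y0 \<rho> k = 0) \<and>
                 mu q x0 y0 \<rho> (-1) \<ge> 2 * qmin q)) \<and>
         (\<forall>z \<rho>. optimal_plan q z z \<rho> \<longrightarrow> (\<forall>k::int. k \<noteq> 0 \<longrightarrow> mu q z z \<rho> k = 0))"
proof -
  interpret G q using assms by unfold_locales
  have part1: "\<exists>\<rho>. optimal_plan q x0 y0 \<rho> \<and>
                 (\<forall>k::int. \<bar>k\<bar> > 1 \<longrightarrow> mu q x0 y0 \<rho> k = 0) \<and>
                 mu q x0 y0 \<rho> (-1) \<ge> 2 * qmin q" if neq: "x0 \<noteq> y0"
  proof -
    obtain \<rho> where \<rho>: "fin_plan x0 y0 \<rho>" "\<And>\<sigma>. fin_plan x0 y0 \<sigma> \<Longrightarrow> Cf x0 y0 \<sigma> \<le> Cf x0 y0 \<rho>"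
      using exists_opt[of x0 y0] by blast
    obtain \<rho>' where \<rho>': "fin_plan x0 y0 \<rho>'" "Cf x0 y0 \<rho> \<le> Cf x0 y0 \<rho>'"
      "\<And>x y. \<rho>' x y \<noteq> 0 \<Longrightarrow> \<bar>int (d x y) - int (d x0 y0)\<bar> \<le> 1" "2 * qmin q \<le> mu q x0 y0 \<rho>' (-1)"
      using improve[OF neq \<rho>(1)] by blast
    have opt: "optimal_plan q x0 y0 \<rho>'"
      unfolding optimal_plan_def
    proof (intro conjI allI impI)
      show "transport_plan q x0 y0 \<rho>'" by (rule fin_plan[OF \<rho>'(1)])
      fix \<sigma> assume "transport_plan q x0 y0 \<sigma>"
      hence "fin_plan x0 y0 \<sigma>" by (rule plan_fin)
      thus "cost q x0 y0 \<sigma> \<le> cost q x0 y0 \<rho>'"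
        using \<rho>(2) \<rho>'(2) cost_eq \<rho>'(1) by fastforce
    qed
    have "mu q x0 y0 \<rho>' k = 0" if "\<bar>k\<bar> > 1" for k :: int
      unfolding mu_def
    proof (rule infsum_0)
      fix p assume p: "p \<in> {(x, y). int (d x y) - int (d x0 y0) = k}"
      obtain x y where xy: "p = (x, y)" by (cases p)
      show "(case p of (x, y) \<Rightarrow> \<rho>' x y) = 0" using \<rho>'(3)[of x y] p xy that by auto
    qed
    thus ?thesis using opt \<rho>'(4) by blast
  qed
  show ?thesis using part1 self_opt by blast
qed

end
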